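(* Let $\theta\in[0,\pi)\setminus\{\pi/2\}$, $\kappa(\theta):=\gamma-\log2+\tan\theta$, and for $t\ge0$ define $$K_\theta(t):=\lim_{R\to\infty}\frac{1}{2\pi i}\int_{-iR}^{iR}e^{t\zeta}\big(\log\sqrt\zeta+\kappa(\theta)\big)^{-1}d\zeta$$ (integral along the imaginary axis). Then there is a bounded function $K^1_\theta\in C^\infty([0,\infty))$ such that for $t>0$ $$K_\theta(t)=-\frac1\pi\,\mathrm{Im}\left\{\int_1^\infty e^{-ty}\big(\log\sqrt y+i\pi/2+\kappa(\theta)\big)^{-1}dy\right\}+K^1_\theta(t)=2\int_1^\infty\frac{e^{-ty}}{(\log y+2\kappa(\theta))^2+\pi^2}\,dy+K^1_\theta(t).$$
   Context: $\gamma$ is the Euler–Mascheroni constant; $\sqrt\zeta$ and $\log\zeta$ denote the principal branches on $\mathbb C\setminus(-\infty,0]$, extended to the imaginary axis by continuity away from $0$ (at $\zeta=0$ the integrand is interpreted as its limit $0$). *)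

theory Defs
  imports "HOL-Analysis.Analysis"
begin

definition kappa :: "real \<Rightarrow> real" where
  "kappa \<theta> = euler_mascheroni - ln 2 + tan \<theta>"

definition K_integrand :: "real \<Rightarrow> real \<Rightarrow> complex \<Rightarrow> complex" where
  "K_integrand \<theta> t z =
     (if z = 0 then 0 else exp (of_real t * z) / (Ln (csqrt z) + of_real (kappa \<theta>)))"

text \<open>(1/(2 pi i)) times the integral from -iR to iR along the imaginary axis,
  parametrised as z = i y, dz = i dy, y in [-R, R].\<close>
definition K_partial :: "real \<Rightarrow> real \<Rightarrow> real \<Rightarrow> complex" where
  "K_partial \<theta> t R =
     (1 / (2 * of_real pi * \<i>)) * integral {-R..R} (\<lambda>y. K_integrand \<theta> t (\<i> * of_real y) * \<i>)"

end

theory Submission imports Defs "HOL-Real_Asymp.Real_Asymp" begin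

definition fz :: "real \<Rightarrow> real \<Rightarrow> complex \<Rightarrow> complex" where
  "fz c t z = exp (of_real t * z) / (Ln z / 2 + of_real c)"

lemma Im_Ln_ge_pi2:
  assumes "0 < Im z" "Re z \<le> 0"
  shows "pi / 2 \<le> Im (Ln z)"
proof (rule ccontr)
  assume "\<not> ?thesis"
  hence lt: "Im (Ln z) < pi/2" by simp
  have z0: "z \<noteq> 0" using assms by auto
  have pos: "0 < Im (Ln z)" using Im_Ln_pos_lt_imp[OF assms(1)] by simp
  have "cos (Im (Ln z)) > 0" using lt pos by (intro cos_gt_zero) auto
  moreover have "Re z = exp (Re (Ln z)) * cos (Im (Ln z))"
    by (metis Re_exp exp_Ln z0)
  ultimately have "Re z > 0" by simp
  thus False using assms by simp
qed

lemma norm_den_ge: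
  assumes "0 < Im z" "Re z \<le> 0"
  shows "pi / 4 \<le> norm (Ln z / 2 + of_real c)"
proof -
  have "pi/4 \<le> Im (Ln z / 2 + of_real c)" using Im_Ln_ge_pi2[OF assms] by simp
  also have "\<dots> \<le> norm (Ln z / 2 + of_real c)" using abs_Im_le_cmod[of "Ln z / 2 + of_real c"] by linarith
  finally show ?thesis .
qed


lemma norm_fz_le:
  assumes "0 < Im z" "Re z \<le> 0"
  shows "norm (fz c t z) \<le> 4 / pi * exp (t * Re z)"
proof -
  have d: "pi / 4 \<le> norm (Ln z / 2 + of_real c)" by (rule norm_den_ge[OF assms])
  have n0: "0 < norm (Ln z / 2 + of_real c)" using d pi_gt_zero by linarith
  have "norm (fz c t z) = exp (t * Re z) / norm (Ln z / 2 + of_real c)"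
    by (simp add: fz_def norm_divide)
  also have "\<dots> \<le> exp (t * Re z) / (pi/4)"
    using d n0 by (intro divide_left_mono) auto
  finally show ?thesis by (simp add: mult_ac)
qed

lemma norm_fz_le_top:
  assumes "0 < R" "R \<le> Im z" "0 < ln R / 2 + c"
  shows "norm (fz c t z) \<le> exp (t * Re z) / (ln R / 2 + c)"
proof -
  have z0: "z \<noteq> 0" using assms by auto
  have "R \<le> norm z" using assms abs_Im_le_cmod[of z] by linarith
  hence "ln R \<le> ln (norm z)" using assms by (subst ln_le_cancel_iff) auto
  hence "ln R / 2 + c \<le> Re (Ln z / 2 + of_real c)" using z0 by simp
  also have "\<dots> \<le> norm (Ln z / 2 + of_real c)" using complex_Re_le_cmod by blast
  finally have d: "ln R / 2 + c \<le> norm (Ln z / 2 + of_real c)" .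
  have "norm (fz c t z) = exp (t * Re z) / norm (Ln z / 2 + of_real c)"
    by (simp add: fz_def norm_divide)
  also have "\<dots> \<le> exp (t * Re z) / (ln R / 2 + c)"
    using d assms by (intro divide_left_mono) (auto intro!: mult_pos_pos)
  finally show ?thesis .
qed

lemma upper_not_nonpos: "0 < Im z \<Longrightarrow> z \<notin> \<real>\<^sub>\<le>\<^sub>0"
  by (auto simp: complex_nonpos_Reals_iff)

lemma den_nz: "0 < Im z \<Longrightarrow> Ln z / 2 + of_real c \<noteq> 0"
proof
  assume "0 < Im z" "Ln z / 2 + of_real c = 0"
  hence "Im (Ln z / 2 + of_real c) = 0" by simp
  moreover have "0 < Im (Ln z)" using Im_Ln_pos_lt_imp[OF \<open>0 < Im z\<close>] by simp
  ultimately show False by simp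
qed

definition fz' :: "real \<Rightarrow> real \<Rightarrow> complex \<Rightarrow> complex" where
  "fz' c t z = of_real t * exp (of_real t * z) / (Ln z / 2 + of_real c)
     - exp (of_real t * z) * (inverse z / 2) / (Ln z / 2 + of_real c)^2"

lemma quot_aux: "(L::complex) \<noteq> 0 \<Longrightarrow> (a * L - b) / (L * L) = a / L - b / L^2"
  by (simp add: field_simps power2_eq_square)

lemma fz_deriv:
  assumes "0 < Im z"
  shows "(fz c t has_field_derivative fz' c t z) (at z)"
proof -
  have nn: "z \<notin> \<real>\<^sub>\<le>\<^sub>0" using upper_not_nonpos[OF assms] .
  have dn: "Ln z / 2 + of_real c \<noteq> 0" using den_nz[OF assms] .
  have z0: "z \<noteq> 0" using assms by auto
  have dd: "((\<lambda>z. exp (of_real t * z) / (Ln z / 2 + of_real c)) has_field_derivative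
     ((of_real t * exp (of_real t * z)) * (Ln z / 2 + of_real c) - exp (of_real t * z) * (inverse z / 2))
       / ((Ln z / 2 + of_real c) * (Ln z / 2 + of_real c))) (at z)"
  proof (rule DERIV_divide)
    show "((\<lambda>x. exp (of_real t * x)) has_field_derivative of_real t * exp (of_real t * z)) (at z)"
      using DERIV_chain2[OF DERIV_exp DERIV_cmult[OF DERIV_ident, of "of_real t"]]
      by (simp add: mult.commute)
    show "((\<lambda>x. Ln x / 2 + of_real c) has_field_derivative inverse z / 2) (at z)"
      using DERIV_add[OF DERIV_cdivide[OF has_field_derivative_Ln[OF nn], of 2] DERIV_const[of "of_real c"]]
      by simp
  qed (rule dn)
  have eq: "((of_real t * exp (of_real t * z)) * (Ln z / 2 + of_real c) - exp (of_real t * z) * (inverse z / 2))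
       / ((Ln z / 2 + of_real c) * (Ln z / 2 + of_real c)) = fz' c t z"
    unfolding fz'_def by (rule quot_aux[OF dn])
  show ?thesis unfolding fz_def by (rule DERIV_cong[OF dd eq])
qed

lemma fz_cont: "continuous_on {z. 0 < Im z} (fz c t)"
  unfolding fz_def
  by (intro continuous_intros) (auto simp: upper_not_nonpos den_nz)

lemma fz'_cont: "continuous_on {z. 0 < Im z} (fz' c t)"
  unfolding fz'_def
  by (intro continuous_intros) (auto simp: upper_not_nonpos den_nz)

lemma Ln_csqrt: "z \<noteq> 0 \<Longrightarrow> Ln (csqrt z) = Ln z / 2"
proof -
  assume z: "z \<noteq> 0"
  have "Ln (csqrt z) = Ln (exp (Ln z / 2))" by (simp add: csqrt_exp_Ln z)
  also have "\<dots> = Ln z / 2"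
    using mpi_less_Im_Ln[of z] Im_Ln_le_pi[of z] pi_gt_zero z
    by (intro Ln_exp) auto
  finally show ?thesis .
qed

lemma K_integrand_fz: "z \<noteq> 0 \<Longrightarrow> K_integrand th t z = fz (kappa th) t z"
  by (simp add: K_integrand_def fz_def Ln_csqrt)


lemma vd_Complex_x: "((\<lambda>x. Complex x y) has_vector_derivative 1) (at x within S)"
proof -
  have "((\<lambda>x. of_real x + \<i> * of_real y :: complex) has_vector_derivative 1) (at x within S)"
    by (auto intro!: derivative_eq_intros)
  thus ?thesis by (simp add: Complex_eq)
qed

lemma vd_Complex_y: "((\<lambda>y. Complex x y) has_vector_derivative \<i>) (at y within S)"
proof -
  have "((\<lambda>y. of_real x + \<i> * of_real y :: complex) has_vector_derivative \<i>) (at y within S)"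
    by (auto intro!: derivative_eq_intros)
  thus ?thesis by (simp add: Complex_eq)
qed


lemma rect_cauchy:
  fixes f f' :: "complex \<Rightarrow> complex"
  assumes x12: "x1 \<le> x2" and y12: "y1 \<le> y2"
    and der: "\<And>x y. x \<in> {x1..x2} \<Longrightarrow> y \<in> {y1..y2} \<Longrightarrow>
               (f has_field_derivative f' (Complex x y)) (at (Complex x y))"
    and cont: "continuous_on {z. Re z \<in> {x1..x2} \<and> Im z \<in> {y1..y2}} f'"
  shows "integral {y1..y2} (\<lambda>y. f (Complex x2 y)) - integral {y1..y2} (\<lambda>y. f (Complex x1 y))
       = - \<i> * integral {x1..x2} (\<lambda>x. f (Complex x y2) - f (Complex x y1))"
proof -
  define Phi where "Phi x = integral (cbox y1 y2) (\<lambda>y. f (Complex x y))" for x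
  have contC: "continuous_on A (\<lambda>(x, y). Complex x y)" for A
  proof -
    have "continuous_on A (\<lambda>p. of_real (fst p) + \<i> * of_real (snd p) :: complex)"
      by (intro continuous_intros)
    thus ?thesis by (simp add: Complex_eq case_prod_beta)
  qed
  have cont2: "continuous_on ({x1..x2} \<times> cbox y1 y2) (\<lambda>(x, y). f' (Complex x y))"
  proof -
    have "continuous_on ({x1..x2} \<times> cbox y1 y2) (f' \<circ> (\<lambda>(x, y). Complex x y))"
      by (rule continuous_on_compose[OF contC continuous_on_subset[OF cont]]) auto
    thus ?thesis by (simp add: o_def case_prod_beta)
  qed
  have fcont_x: "continuous_on {y1..y2} (\<lambda>y. f (Complex x y))" if "x \<in> {x1..x2}" for x
  proof -
    have "continuous_on {y1..y2} (f \<circ> (\<lambda>y. Complex x y))"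
    proof (rule continuous_at_imp_continuous_on, safe)
      fix y assume "y \<in> {y1..y2}"
      have "isCont f (Complex x y)" using der[OF that \<open>y \<in> {y1..y2}\<close>] by (rule DERIV_isCont)
      moreover have "isCont (\<lambda>y. Complex x y) y"
        using vd_Complex_y[of x y UNIV] by (metis has_vector_derivative_continuous)
      ultimately show "isCont (f \<circ> (\<lambda>y. Complex x y)) y" unfolding o_def by (rule isCont_o2[rotated])
    qed
    thus ?thesis by (simp add: o_def)
  qed
  have fcont_y: "continuous_on {x1..x2} (\<lambda>x. f (Complex x y))" if "y \<in> {y1..y2}" for y
  proof -
    have "continuous_on {x1..x2} (f \<circ> (\<lambda>x. Complex x y))"
    proof (rule continuous_at_imp_continuous_on, safe)
      fix x assume "x \<in> {x1..x2}"
      have "isCont f (Complex x y)" using der[OF \<open>x \<in> {x1..x2}\<close> that] by (rule DERIV_isCont)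
      moreover have "isCont (\<lambda>x. Complex x y) x"
        using vd_Complex_x[of y x UNIV] by (metis has_vector_derivative_continuous)
      ultimately show "isCont (f \<circ> (\<lambda>x. Complex x y)) x" unfolding o_def by (rule isCont_o2[rotated])
    qed
    thus ?thesis by (simp add: o_def)
  qed
  have inner: "integral (cbox y1 y2) (\<lambda>y. f' (Complex x y)) = - \<i> * (f (Complex x y2) - f (Complex x y1))"
    if x: "x \<in> {x1..x2}" for x
  proof -
    have "((\<lambda>y. \<i> * f' (Complex x y)) has_integral (f (Complex x y2) - f (Complex x y1))) {y1..y2}"
    proof (rule fundamental_theorem_of_calculus[OF y12])
      fix y assume y: "y \<in> {y1..y2}"
      have "((f \<circ> (\<lambda>y. Complex x y)) has_vector_derivative (\<i> * f' (Complex x y))) (at y within {y1..y2})"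
        by (rule field_vector_diff_chain_within[OF vd_Complex_y])
           (rule has_field_derivative_at_within[OF der[OF x y]])
      thus "((\<lambda>y. f (Complex x y)) has_vector_derivative (\<i> * f' (Complex x y))) (at y within {y1..y2})"
        by (simp add: o_def)
    qed
    from has_integral_mult_right[OF this, of "- \<i>"]
    have "((\<lambda>y. f' (Complex x y)) has_integral - \<i> * (f (Complex x y2) - f (Complex x y1))) {y1..y2}"
      by simp
    thus ?thesis by (simp add: integral_unique)
  qed
  have dPhi: "(Phi has_vector_derivative (- \<i> * (f (Complex x y2) - f (Complex x y1)))) (at x within {x1..x2})"
    if x: "x \<in> {x1..x2}" for x
  proof -
    have "(Phi has_vector_derivative integral (cbox y1 y2) (\<lambda>y. f' (Complex x y))) (at x within {x1..x2})"
      unfolding Phi_def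
    proof (rule leibniz_rule_vector_derivative[where fx = "\<lambda>x y. f' (Complex x y)"])
      fix x y assume "x \<in> {x1..x2}" "y \<in> cbox y1 y2"
      hence x': "x \<in> {x1..x2}" and y': "y \<in> {y1..y2}" by auto
      have "((f \<circ> (\<lambda>x. Complex x y)) has_vector_derivative (1 * f' (Complex x y))) (at x within {x1..x2})"
        by (rule field_vector_diff_chain_within[OF vd_Complex_x])
           (rule has_field_derivative_at_within[OF der[OF x' y']])
      thus "((\<lambda>x. f (Complex x y)) has_vector_derivative f' (Complex x y)) (at x within {x1..x2})"
        by (simp add: o_def)
    next
      fix x assume "x \<in> {x1..x2}"
      thus "(\<lambda>y. f (Complex x y)) integrable_on cbox y1 y2"
        using fcont_x by (auto intro!: integrable_continuous_interval)
    next
      show "continuous_on ({x1..x2} \<times> cbox y1 y2) (\<lambda>(x, y). f' (Complex x y))" by (rule cont2)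
    qed (use x in auto)
    thus ?thesis using inner[OF x] by simp
  qed
  have "((\<lambda>x. - \<i> * (f (Complex x y2) - f (Complex x y1))) has_integral (Phi x2 - Phi x1)) {x1..x2}"
    by (rule fundamental_theorem_of_calculus[OF x12 dPhi])
  hence "Phi x2 - Phi x1 = integral {x1..x2} (\<lambda>x. - \<i> * (f (Complex x y2) - f (Complex x y1)))"
    by (rule integral_unique[symmetric])
  also have "\<dots> = - \<i> * integral {x1..x2} (\<lambda>x. f (Complex x y2) - f (Complex x y1))"
  proof -
    have "(\<lambda>x. f (Complex x y2) - f (Complex x y1)) integrable_on {x1..x2}"
      using fcont_y y12 by (auto intro!: integrable_continuous_interval continuous_intros)
    from has_integral_mult_right[OF integrable_integral[OF this], of "- \<i>"]
    show ?thesis by (simp add: integral_unique)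
  qed
  finally show ?thesis by (simp add: Phi_def)
qed


definition HH :: "real \<Rightarrow> real \<Rightarrow> real \<Rightarrow> complex" where
  "HH c t y = exp (- of_real (t * y)) /
                    (of_real (ln (sqrt y)) + \<i> * of_real pi / 2 + of_real c)"

lemma bottom_pointwise:
  assumes s: "0 < s" and d: "d \<longlonglongrightarrow> 0" and dpos: "\<And>k. 0 < d k"
  shows "(\<lambda>k. fz c t (Complex (-s) (d k))) \<longlonglongrightarrow> HH c t s"
proof -
  define q where "q e = exp (of_real t * Complex (-s) e) / ((Ln (Complex s (-e)) + \<i> * pi) / 2 + of_real c)" for e
  have eq: "fz c t (Complex (-s) e) = q e" if "0 < e" for e
  proof -
    have "Complex (-s) e = - Complex s (-e)" by (simp add: complex_eq_iff)
    hence "Ln (Complex (-s) e) = Ln (- Complex s (-e))" by simp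
    also have "\<dots> = Ln (Complex s (-e)) + \<i> * pi"
      using that s by (subst Ln_minus) (auto simp: complex_eq_iff)
    finally show ?thesis by (simp add: fz_def q_def)
  qed
  have Lns: "Ln (Complex s 0) = of_real (ln s)"
    using Ln_of_real[OF s] by (simp add: complex_of_real_def)
  have nz: "(Ln (Complex s (- 0)) + \<i> * pi) / 2 + of_real c \<noteq> 0"
  proof
    assume "(Ln (Complex s (- 0)) + \<i> * pi) / 2 + of_real c = 0"
    hence "Im ((Ln (Complex s (- 0)) + \<i> * pi) / 2 + of_real c) = 0" by simp
    thus False using Lns by simp
  qed
  have nn: "Complex s (- 0) \<notin> \<real>\<^sub>\<le>\<^sub>0" using s by (auto simp: complex_nonpos_Reals_iff)
  have "isCont q 0"
    unfolding q_def
  proof (intro continuous_intros)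
    show "isCont (\<lambda>x. Complex (-s) x) 0" using vd_Complex_y[of "-s" 0 UNIV]
      by (metis has_vector_derivative_continuous)
    show "isCont (\<lambda>x. Complex s (- x)) 0"
    proof -
      have "isCont (\<lambda>x. of_real s - \<i> * of_real x :: complex) 0" by (intro continuous_intros)
      thus ?thesis by (simp add: Complex_eq)
    qed
    show "(Ln (Complex s (- 0)) + \<i> * pi) / 2 + of_real c \<noteq> 0" by (rule nz)
  qed (use nn in auto)
  hence "(\<lambda>k. q (d k)) \<longlonglongrightarrow> q 0" using d by (simp add: isCont_tendsto_compose)
  moreover have "q 0 = HH c t s"
    using s Lns by (simp add: q_def HH_def ln_sqrt Complex_eq field_simps)
  ultimately show ?thesis using eq dpos by simp
qed


lemma cont_fz_line_y: "continuous_on A (\<lambda>y. fz c t (Complex x y))" if "\<And>y. y \<in> A \<Longrightarrow> 0 < y"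
proof -
  have "continuous_on A ((fz c t) \<circ> (\<lambda>y. of_real x + \<i> * of_real y))"
    by (rule continuous_on_compose[OF _ continuous_on_subset[OF fz_cont]])
       (auto intro!: continuous_intros simp: that)
  thus ?thesis by (simp add: o_def Complex_eq)
qed

lemma cont_fz_line_x: "continuous_on A (\<lambda>s. fz c t (Complex (- s) y))" if "0 < y"
proof -
  have "continuous_on A ((fz c t) \<circ> (\<lambda>s. - of_real s + \<i> * of_real y))"
    by (rule continuous_on_compose[OF _ continuous_on_subset[OF fz_cont]])
       (auto intro!: continuous_intros simp: that)
  thus ?thesis by (simp add: o_def Complex_eq)
qed

context
  fixes c t R :: real
  assumes tpos: "0 < t" and Rpos: "0 < R"
begin

definition dd :: "nat \<Rightarrow> real" where "dd k = R / (real k + 2)"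

lemma dd_pos: "0 < dd k" using Rpos by (simp add: dd_def)
lemma dd_lt: "dd k < R" using Rpos by (simp add: dd_def field_simps add_pos_nonneg)
lemma dd_lim: "dd \<longlonglongrightarrow> 0" unfolding dd_def by real_asymp

definition g0 :: "real \<Rightarrow> complex" where
  "g0 y = (if 0 < y then fz c t (Complex 0 y) else 0)"

lemma right_dct:
  shows "g0 integrable_on {0..R}"
    and "(\<lambda>k. integral {dd k..R} (\<lambda>y. fz c t (Complex 0 y))) \<longlonglongrightarrow> integral {0..R} g0"
proof -
  define F where "F k y = (if y \<in> {dd k..} then fz c t (Complex 0 y) else 0)" for k y
  have set: "{dd k..} \<inter> {0..R} = {dd k..R}" for k using dd_pos[of k] by auto
  have intF: "F k integrable_on {0..R}" for k
    unfolding F_def integrable_restrict_Int set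
    by (rule integrable_continuous_interval, rule cont_fz_line_y) (use dd_pos[of k] in auto)
  have eqF: "integral {0..R} (F k) = integral {dd k..R} (\<lambda>y. fz c t (Complex 0 y))" for k
    unfolding F_def integral_restrict_Int set ..
  have inth: "(\<lambda>y. 4 / pi) integrable_on {0..R}" by (rule integrable_continuous_interval) (rule continuous_on_const)
  have bound: "norm (F k y) \<le> 4 / pi" if "y \<in> {0..R}" for k y
  proof (cases "dd k \<le> y")
    case True
    hence "0 < y" using dd_pos[of k] by linarith
    hence "norm (fz c t (Complex 0 y)) \<le> 4 / pi * exp (t * Re (Complex 0 y))"
      by (intro norm_fz_le) auto
    thus ?thesis using True by (simp add: F_def)
  qed (simp add: F_def)
  have conv: "(\<lambda>k. F k y) \<longlonglongrightarrow> g0 y" if "y \<in> {0..R}" for y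
  proof (cases "0 < y")
    case True
    have "eventually (\<lambda>k. dd k < y) sequentially" using order_tendstoD(2)[OF dd_lim True] .
    hence "eventually (\<lambda>k. F k y = g0 y) sequentially"
      by eventually_elim (use True in \<open>auto simp: F_def g0_def\<close>)
    thus ?thesis by (rule tendsto_eventually)
  next
    case False
    hence "F k y = g0 y" for k using dd_pos[of k] by (auto simp: F_def g0_def)
    thus ?thesis by simp
  qed
  note D = dominated_convergence[OF intF inth bound conv]
  show "g0 integrable_on {0..R}" by (rule D(1))
  show "(\<lambda>k. integral {dd k..R} (\<lambda>y. fz c t (Complex 0 y))) \<longlonglongrightarrow> integral {0..R} g0"
    using D(2) by (simp add: eqF)
qed


definition H0 :: "real \<Rightarrow> complex" where
  "H0 s = (if 0 < s then HH c t s else 0)"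

lemma bound_bottom: "norm (fz c t (Complex (- s) (dd k))) \<le> 4 / pi * exp (- t * s)" if "0 \<le> s"
  using norm_fz_le[of "Complex (- s) (dd k)" c t] dd_pos[of k] that by simp

lemma bottom1_dct:
  shows "H0 integrable_on {0..1}"
    and "(\<lambda>k. integral {0..1} (\<lambda>s. fz c t (Complex (- s) (dd k)))) \<longlonglongrightarrow> integral {0..1} H0"
proof -
  define F where "F k s = (if 0 < s then fz c t (Complex (- s) (dd k)) else 0)" for k s
  have int0: "(\<lambda>s. fz c t (Complex (- s) (dd k))) integrable_on {0..1}" for k
    by (rule integrable_continuous_interval, rule cont_fz_line_x) (rule dd_pos)
  have intF: "F k integrable_on {0..1}" for k
    by (rule integrable_spike[OF int0 negligible_sing[of 0]]) (auto simp: F_def)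
  have eqF: "integral {0..1} (F k) = integral {0..1} (\<lambda>s. fz c t (Complex (- s) (dd k)))" for k
    by (rule integral_spike[OF negligible_sing[of 0]]) (auto simp: F_def)
  have inth: "(\<lambda>s. 4 / pi * exp (- t * s)) integrable_on {0..1}"
    by (rule integrable_continuous_interval) (intro continuous_intros)
  have bound: "norm (F k s) \<le> 4 / pi * exp (- t * s)" if "s \<in> {0..1}" for k s
    using bound_bottom[of s k] that by (auto simp: F_def)
  have conv: "(\<lambda>k. F k s) \<longlonglongrightarrow> H0 s" if "s \<in> {0..1}" for s
  proof (cases "0 < s")
    case True
    thus ?thesis using bottom_pointwise[OF True dd_lim dd_pos, of c t]
      by (simp add: F_def H0_def)
  qed (simp add: F_def H0_def)
  note D = dominated_convergence[OF intF inth bound conv]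
  show "H0 integrable_on {0..1}" by (rule D(1))
  show "(\<lambda>k. integral {0..1} (\<lambda>s. fz c t (Complex (- s) (dd k)))) \<longlonglongrightarrow> integral {0..1} H0"
    using D(2) by (simp add: eqF)
qed

definition XX :: "nat \<Rightarrow> real" where "XX k = real k + 1"

lemma exp_int_half: "(\<lambda>s. 4 / pi * exp (- t * s)) integrable_on {a..}"
proof -
  have "((\<lambda>s. exp (- t * s)) has_integral exp (- t * a) / t) {a..}"
    by (rule has_integral_exp_minus_to_infinity[OF tpos])
  from has_integral_mult_right[OF this, of "4 / pi"] show ?thesis
    by (auto simp: integrable_on_def)
qed

lemma bottom2_dct:
  shows "HH c t integrable_on {1..}"
    and "(\<lambda>k. integral {1..XX k} (\<lambda>s. fz c t (Complex (- s) (dd k)))) \<longlonglongrightarrow> integral {1..} (HH c t)"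
proof -
  define F where "F k s = (if s \<in> {..XX k} then fz c t (Complex (- s) (dd k)) else 0)" for k s
  have set: "{..XX k} \<inter> {1..} = {1..XX k}" for k by auto
  have intF: "F k integrable_on {1..}" for k
    unfolding F_def integrable_restrict_Int set
    by (rule integrable_continuous_interval, rule cont_fz_line_x) (rule dd_pos)
  have eqF: "integral {1..} (F k) = integral {1..XX k} (\<lambda>s. fz c t (Complex (- s) (dd k)))" for k
    unfolding F_def integral_restrict_Int set ..
  have bound: "norm (F k s) \<le> 4 / pi * exp (- t * s)" if "s \<in> {1..}" for k s
    using bound_bottom[of s k] that by (auto simp: F_def)
  have conv: "(\<lambda>k. F k s) \<longlonglongrightarrow> HH c t s" if "s \<in> {1..}" for s
  proof -
    have s0: "0 < s" using that by auto
    have "eventually (\<lambda>k. s \<le> XX k) sequentially"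
    proof -
      obtain n :: nat where "s \<le> real n" using real_arch_simple by blast
      thus ?thesis unfolding eventually_sequentially XX_def by (intro exI[of _ n]) auto
    qed
    hence "eventually (\<lambda>k. F k s = fz c t (Complex (- s) (dd k))) sequentially"
      by eventually_elim (auto simp: F_def)
    from tendsto_cong[OF this] bottom_pointwise[OF s0 dd_lim dd_pos, of c t]
    show ?thesis by simp
  qed
  note D = dominated_convergence[OF intF exp_int_half bound conv]
  show "HH c t integrable_on {1..}" by (rule D(1))
  show "(\<lambda>k. integral {1..XX k} (\<lambda>s. fz c t (Complex (- s) (dd k)))) \<longlonglongrightarrow> integral {1..} (HH c t)"
    using D(2) by (simp add: eqF)
qed


lemma cont_fz_line_x': "continuous_on A (\<lambda>x. fz c t (Complex x y))" if "0 < y"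
proof -
  have "continuous_on A ((fz c t) \<circ> (\<lambda>x. of_real x + \<i> * of_real y))"
    by (rule continuous_on_compose[OF _ continuous_on_subset[OF fz_cont]])
       (auto intro!: continuous_intros simp: that)
  thus ?thesis by (simp add: o_def Complex_eq)
qed

lemma edge_identity:
  assumes X: "0 < X" and d: "0 < d" "d \<le> R"
  shows "\<i> * integral {d..R} (\<lambda>y. fz c t (Complex 0 y))
       = integral {0..X} (\<lambda>s. fz c t (Complex (- s) R)) - integral {0..X} (\<lambda>s. fz c t (Complex (- s) d))
         + \<i> * integral {d..R} (\<lambda>y. fz c t (Complex (- X) y))"
proof -
  have rc: "integral {d..R} (\<lambda>y. fz c t (Complex 0 y)) - integral {d..R} (\<lambda>y. fz c t (Complex (- X) y))
       = - \<i> * integral {- X..0} (\<lambda>x. fz c t (Complex x R) - fz c t (Complex x d))"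
  proof (rule rect_cauchy[where f' = "fz' c t"])
    show "- X \<le> 0" using X by simp
    show "d \<le> R" using d by simp
    fix x y assume "x \<in> {- X..0}" "y \<in> {d..R}"
    hence "0 < Im (Complex x y)" using d by auto
    thus "(fz c t has_field_derivative fz' c t (Complex x y)) (at (Complex x y))" by (rule fz_deriv)
  next
    show "continuous_on {z. Re z \<in> {- X..0} \<and> Im z \<in> {d..R}} (fz' c t)"
      by (rule continuous_on_subset[OF fz'_cont]) (use d in auto)
  qed
  have i1: "(\<lambda>x. fz c t (Complex x R)) integrable_on {- X..0}"
    by (rule integrable_continuous_interval, rule cont_fz_line_x') (rule Rpos)
  have i2: "(\<lambda>x. fz c t (Complex x d)) integrable_on {- X..0}"
    by (rule integrable_continuous_interval, rule cont_fz_line_x') (rule d)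
  have refl: "integral {- X..0} g = integral {0..X} (\<lambda>s. g (- s))" for g :: "real \<Rightarrow> complex"
    using Henstock_Kurzweil_Integration.integral_reflect_real[of 0 "- X" g] by simp
  have "\<i> * (integral {d..R} (\<lambda>y. fz c t (Complex 0 y)) - integral {d..R} (\<lambda>y. fz c t (Complex (- X) y)))
      = integral {- X..0} (\<lambda>x. fz c t (Complex x R) - fz c t (Complex x d))"
    unfolding rc by simp
  also have "\<dots> = integral {0..X} (\<lambda>s. fz c t (Complex (- s) R)) - integral {0..X} (\<lambda>s. fz c t (Complex (- s) d))"
    by (simp add: integral_diff[OF i1 i2] refl)
  finally show ?thesis by (simp add: algebra_simps)
qed

lemma main_identity:
  assumes K: "0 < ln R / 2 + c"
  shows "\<exists>L. norm L \<le> 1 / (t * (ln R / 2 + c)) \<and>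
     \<i> * integral {0..R} g0 = L - (integral {0..1} H0 + integral {1..} (HH c t))"
proof -
  define top where "top k = integral {0..XX k} (\<lambda>s. fz c t (Complex (- s) R))" for k
  define A where "A k = integral {dd k..R} (\<lambda>y. fz c t (Complex 0 y))" for k
  define b1 where "b1 k = integral {0..1} (\<lambda>s. fz c t (Complex (- s) (dd k)))" for k
  define b2 where "b2 k = integral {1..XX k} (\<lambda>s. fz c t (Complex (- s) (dd k)))" for k
  define lef where "lef k = integral {dd k..R} (\<lambda>y. fz c t (Complex (- XX k) y))" for k
  define J where "J = integral {0..1} H0 + integral {1..} (HH c t)"
  define B where "B = 1 / (t * (ln R / 2 + c))"
  have XX1: "1 \<le> XX k" for k by (simp add: XX_def)
  have ident: "top k = \<i> * A k + (b1 k + b2 k) - \<i> * lef k" for k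
  proof -
    have "integral {0..XX k} (\<lambda>s. fz c t (Complex (- s) (dd k))) = b1 k + b2 k"
      unfolding b1_def b2_def
      by (rule Henstock_Kurzweil_Integration.integral_combine[symmetric]) (use XX1[of k] in \<open>auto intro!: integrable_continuous_interval cont_fz_line_x dd_pos\<close>)
    thus ?thesis
      using edge_identity[of "XX k" "dd k"] XX1[of k] dd_pos[of k] dd_lt[of k]
      unfolding top_def A_def lef_def by simp
  qed
  have lefb: "norm (lef k) \<le> R * (4 / pi * exp (- t * XX k))" for k
  proof -
    have "norm (lef k) \<le> integral {dd k..R} (\<lambda>y. 4 / pi * exp (- t * XX k))"
      unfolding lef_def
    proof (rule integral_norm_bound_integral)
      show "(\<lambda>y. fz c t (Complex (- XX k) y)) integrable_on {dd k..R}"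
        by (rule integrable_continuous_interval, rule cont_fz_line_y) (use dd_pos[of k] in auto)
      fix y assume "y \<in> {dd k..R}"
      hence "0 < Im (Complex (- XX k) y)" "Re (Complex (- XX k) y) \<le> 0"
        using dd_pos[of k] XX1[of k] by auto
      from norm_fz_le[OF this, of c t]
      show "norm (fz c t (Complex (- XX k) y)) \<le> 4 / pi * exp (- t * XX k)" by simp
    qed (rule integrable_continuous_interval, rule continuous_on_const)
    also have "\<dots> = (R - dd k) * (4 / pi * exp (- t * XX k))"
      using dd_lt[of k] by simp
    also have "\<dots> \<le> R * (4 / pi * exp (- t * XX k))"
      using dd_pos[of k] by (intro mult_right_mono) auto
    finally show ?thesis .
  qed
  have lef0: "lef \<longlonglongrightarrow> 0"
  proof (rule Lim_null_comparison[OF always_eventually])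
    show "\<forall>k. norm (lef k) \<le> R * (4 / pi * exp (- t * XX k))" using lefb by blast
    show "(\<lambda>k. R * (4 / pi * exp (- t * XX k))) \<longlonglongrightarrow> 0"
      unfolding XX_def using tpos by real_asymp
  qed
  have "(\<lambda>k. \<i> * A k + (b1 k + b2 k) - \<i> * lef k) \<longlonglongrightarrow> \<i> * integral {0..R} g0 + J - \<i> * 0"
    unfolding J_def A_def b1_def b2_def
    by (intro tendsto_intros right_dct(2) bottom1_dct(2) bottom2_dct(2) lef0)
  moreover have "top = (\<lambda>k. \<i> * A k + (b1 k + b2 k) - \<i> * lef k)" using ident by (intro ext)
  ultimately have topl: "top \<longlonglongrightarrow> \<i> * integral {0..R} g0 + J" by simp
  have topb: "norm (top k) \<le> B" for k
  proof -
    have ie: "((\<lambda>s. exp (- t * s) / (ln R / 2 + c)) has_integral (exp (- t * 0) / t) / (ln R / 2 + c)) {0..}"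
      by (rule has_integral_divide[OF has_integral_exp_minus_to_infinity[OF tpos]])
    have "norm (top k) \<le> integral {0..XX k} (\<lambda>s. exp (- t * s) / (ln R / 2 + c))"
      unfolding top_def
    proof (rule integral_norm_bound_integral)
      show "(\<lambda>s. fz c t (Complex (- s) R)) integrable_on {0..XX k}"
        by (rule integrable_continuous_interval, rule cont_fz_line_x) (rule Rpos)
      show "(\<lambda>s. exp (- t * s) / (ln R / 2 + c)) integrable_on {0..XX k}"
        by (rule integrable_continuous_interval) (use K in \<open>auto intro!: continuous_intros\<close>)
      fix s assume "s \<in> {0..XX k}"
      from norm_fz_le_top[OF Rpos _ K, of "Complex (- s) R" t]
      show "norm (fz c t (Complex (- s) R)) \<le> exp (- t * s) / (ln R / 2 + c)" by simp
    qed
    also have "\<dots> \<le> integral {0..} (\<lambda>s. exp (- t * s) / (ln R / 2 + c))"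
    proof (rule integral_subset_le)
      show "(\<lambda>s. exp (- t * s) / (ln R / 2 + c)) integrable_on {0..XX k}"
        by (rule integrable_continuous_interval) (use K in \<open>auto intro!: continuous_intros\<close>)
      show "(\<lambda>s. exp (- t * s) / (ln R / 2 + c)) integrable_on {0..}"
        using ie by (auto simp: integrable_on_def)
    qed (use K in auto)
    also have "\<dots> = B" using integral_unique[OF ie] by (simp add: B_def)
    finally show ?thesis .
  qed
  have "norm (\<i> * integral {0..R} g0 + J) \<le> B"
    by (rule Lim_norm_ubound[OF _ topl]) (use topb in auto)
  thus ?thesis
    by (intro exI[of _ "\<i> * integral {0..R} g0 + J"]) (simp add: B_def J_def)
qed

end


lemma cnj_sym_aux: "1 / (2 * of_real pi * \<i>) * (w - cnj w) = complex_of_real (Im w / pi)"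
  by (simp add: complex_diff_cnj)

lemma K_integrand_sym:
  assumes "0 \<le> y"
  shows "K_integrand th t (\<i> * of_real (- y)) * \<i> = - cnj (K_integrand th t (\<i> * of_real y) * \<i>)"
proof (cases "y = 0")
  case False
  hence y: "0 < y" using assms by simp
  have nz1: "\<i> * of_real y \<noteq> 0" "\<i> * of_real (- y) \<noteq> 0" using y by auto
  have nn: "\<i> * of_real y \<notin> \<real>\<^sub>\<le>\<^sub>0" using y by (auto simp: complex_nonpos_Reals_iff)
  have c: "\<i> * of_real (- y) = cnj (\<i> * of_real y)" by (simp add: complex_eq_iff)
  define z where "z = \<i> * of_real y"
  have cz: "cnj z \<noteq> 0" using nz1 by (simp add: z_def)
  have "K_integrand th t (\<i> * of_real (- y)) = K_integrand th t (cnj z)" by (simp only: c z_def)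
  also have "\<dots> = fz (kappa th) t (cnj z)" by (rule K_integrand_fz[OF cz])
  also have "\<dots> = cnj (fz (kappa th) t z)"
    unfolding fz_def using cnj_Ln[OF nn, folded z_def] exp_cnj[of "of_real t * z"] by simp
  also have "\<dots> = cnj (K_integrand th t (\<i> * of_real y))"
    using K_integrand_fz[OF nz1(1)] by (simp add: z_def)
  finally have "K_integrand th t (\<i> * of_real (- y)) = cnj (K_integrand th t (\<i> * of_real y))" .
  thus ?thesis by simp
qed (simp add: K_integrand_def)

lemma K_partial_eq:
  assumes t: "0 < t" and R: "0 < R"
  shows "K_partial th t R = complex_of_real (Im (\<i> * integral {0..R} (g0 (kappa th) t)) / pi)"
proof -
  define c where "c = kappa th"
  define phi where "phi y = K_integrand th t (\<i> * of_real y) * \<i>" for y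
  have phig: "phi y = \<i> * g0 c t y" if "0 \<le> y" for y
  proof (cases "y = 0")
    case False
    hence nz: "\<i> * of_real y \<noteq> 0" by simp
    have e: "\<i> * of_real y = Complex 0 y" by (simp add: complex_eq_iff)
    show ?thesis using False that K_integrand_fz[OF nz, of th t] by (simp add: phi_def g0_def[OF t R] c_def e)
  qed (simp add: phi_def g0_def[OF t R] K_integrand_def)
  have gi: "g0 c t integrable_on {0..R}" using right_dct(1)[OF t R] .
  have i0: "((\<lambda>y. \<i> * g0 c t y) has_integral \<i> * integral {0..R} (g0 c t)) {0..R}"
    by (rule has_integral_mult_right[OF integrable_integral[OF gi]])
  have i0': "(phi has_integral \<i> * integral {0..R} (g0 c t)) {0..R}"
    by (rule has_integral_eq[OF _ i0]) (simp add: phig)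
  define w where "w = \<i> * integral {0..R} (g0 c t)"
  have psi: "((\<lambda>y. phi (- y)) has_integral - cnj w) {0..R}"
  proof -
    have "((\<lambda>y. - cnj (phi y)) has_integral - cnj w) {0..R}"
      using has_integral_neg[OF has_integral_cnj[THEN iffD2, OF i0', unfolded o_def]] w_def by simp
    thus ?thesis
    proof (rule has_integral_eq[rotated])
      fix y :: real assume "y \<in> {0..R}"
      hence "0 \<le> y" by simp
      show "- cnj (phi y) = phi (- y)" unfolding phi_def by (rule K_integrand_sym[OF \<open>0 \<le> y\<close>, symmetric])
    qed
  qed
  have negp: "(phi has_integral - cnj w) {- R..0}"
    using psi Henstock_Kurzweil_Integration.has_integral_reflect_real[where f=phi and i="- cnj w" and a="- R" and b=0] by simp
  have "(phi has_integral (- cnj w + w)) {- R..R}"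
    by (rule has_integral_combine[OF _ _ negp]) (use R i0' w_def in auto)
  hence ie: "integral {- R..R} phi = w - cnj w" by (simp add: integral_unique)
  have "K_partial th t R = 1 / (2 * of_real pi * \<i>) * integral {- R..R} phi"
    unfolding K_partial_def phi_def by simp
  also have "\<dots> = complex_of_real (Im w / pi)" unfolding ie by (rule cnj_sym_aux)
  finally show ?thesis by (simp add: w_def c_def)
qed


definition GG :: "real \<Rightarrow> real \<Rightarrow> real" where
  "GG c s = (if s \<le> 0 then 0 else 1 / ((ln s + 2 * c)^2 + pi^2))"

lemma GG_lim0: "((\<lambda>s. 1 / ((ln s + 2 * c)^2 + pi^2)) \<longlongrightarrow> 0) (at_right 0)"
  by real_asymp

lemma GG_cont: "continuous_on {0..} (GG c)"
proof -
  have pos_den: "(ln s + 2 * c)^2 + pi^2 \<noteq> 0" for s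
    using pi_gt_zero by (smt (verit) zero_le_power2 zero_less_power2)
  have c1: "continuous_on {0<..} (GG c)"
  proof (rule continuous_on_cong[THEN iffD1])
    show "continuous_on {0<..} (\<lambda>s. 1 / ((ln s + 2 * c)^2 + pi^2))"
      by (intro continuous_intros) (auto simp: pos_den)
  qed (auto simp: GG_def)
  show ?thesis
    unfolding continuous_on_eq_continuous_within
  proof (intro ballI)
    fix x :: real assume "x \<in> {0..}"
    show "continuous (at x within {0..}) (GG c)"
    proof (cases "x = 0")
      case False
      hence "x \<in> {0<..}" using \<open>x \<in> {0..}\<close> by auto
      hence "isCont (GG c) x" using c1 continuous_on_eq_continuous_at[OF open_greaterThan, of 0 "GG c"] \<open>x \<in> {0<..}\<close> by auto
      thus ?thesis by (rule continuous_at_imp_continuous_within)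
    next
      case True
      have ev: "eventually (\<lambda>s. 1 / ((ln s + 2 * c)^2 + pi^2) = GG c s) (at_right (0::real))"
        unfolding eventually_at_right_field GG_def by (intro exI[of _ 1]) auto
      have "((GG c) \<longlongrightarrow> 0) (at_right 0)"
        using Lim_transform_eventually[OF GG_lim0 ev] .
      thus ?thesis using True by (simp add: continuous_within at_within_Ici_at_right GG_def)
    qed
  qed
qed


definition DD :: "real \<Rightarrow> nat \<Rightarrow> real \<Rightarrow> real" where
  "DD c n t = 2 * integral {0..1} (\<lambda>s. (- s) ^ n * exp (- (t * s)) * GG c s)"

lemma GG_cont01: "continuous_on {0..1} (GG c)"
  by (rule continuous_on_subset[OF GG_cont]) auto

lemma DD_deriv:
  assumes "0 \<le> t"
  shows "(DD c n has_real_derivative DD c (Suc n) t) (at t within {0..})"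
proof -
  have cG: "continuous_on ({0..} \<times> {0..1}) (\<lambda>p. GG c (snd p))"
    by (rule continuous_on_compose2[OF GG_cont01]) (auto intro!: continuous_intros)
  have "((\<lambda>x. integral (cbox 0 1) (\<lambda>s. (- s) ^ n * exp (- (x * s)) * GG c s)) has_field_derivative
        integral (cbox 0 1) (\<lambda>s. (- s) ^ Suc n * exp (- (t * s)) * GG c s)) (at t within {0..})"
  proof (rule leibniz_rule_field_derivative[where fx = "\<lambda>x s. (- s) ^ Suc n * exp (- (x * s)) * GG c s"])
    fix x s :: real
    show "((\<lambda>x. (- s) ^ n * exp (- (x * s)) * GG c s) has_field_derivative (- s) ^ Suc n * exp (- (x * s)) * GG c s)
          (at x within {0..})"
      by (auto intro!: derivative_eq_intros simp: algebra_simps)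
  next
    fix x :: real
    show "(\<lambda>s. (- s) ^ n * exp (- (x * s)) * GG c s) integrable_on cbox 0 1"
      unfolding cbox_interval
      by (rule integrable_continuous_interval) (intro continuous_intros GG_cont01)
  next
    show "continuous_on ({0..} \<times> cbox 0 1) (\<lambda>(x, s). (- s) ^ Suc n * exp (- (x * s)) * GG c s)"
      unfolding cbox_interval case_prod_beta
      by (intro continuous_intros cG)
  qed (use assms in auto)
  from DERIV_cmult[OF this, of 2] show ?thesis
    unfolding DD_def cbox_interval by simp
qed

lemma GG_bound: "0 \<le> GG c s \<and> GG c s \<le> 1"
proof -
  have "(3::real)^2 \<le> pi^2" by (rule power_mono) (use pi_gt3 in auto)
  hence "9 \<le> pi^2" by simp
  hence "1 \<le> (ln s + 2 * c)^2 + pi^2" using zero_le_power2[of "ln s + 2 * c"] by linarith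
  thus ?thesis by (auto simp: GG_def)
qed

lemma DD0_bound:
  assumes "0 \<le> t"
  shows "\<bar>DD c 0 t\<bar> \<le> 2"
proof -
  have "norm (integral {0..1} (\<lambda>s. (- s) ^ 0 * exp (- (t * s)) * GG c s)) \<le> integral {0..1} (\<lambda>s::real. 1::real)"
  proof (rule integral_norm_bound_integral)
    show "(\<lambda>s. (- s) ^ 0 * exp (- (t * s)) * GG c s) integrable_on {0..1}"
      by (rule integrable_continuous_interval) (intro continuous_intros GG_cont01)
    fix s :: real assume "s \<in> {0..1}"
    hence "exp (- (t * s)) \<le> 1" using assms by simp
    thus "norm ((- s) ^ 0 * exp (- (t * s)) * GG c s) \<le> 1"
      using GG_bound[of c s] by (simp add: abs_mult mult_le_one)
  qed (rule integrable_continuous_interval, rule continuous_on_const)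
  thus ?thesis by (simp add: DD_def)
qed


lemma Im_HH:
  assumes s: "0 < s"
  shows "- (1 / (2 * pi)) * Im (HH c t s) = exp (- (t * s)) / ((ln s + 2 * c)^2 + pi^2)"
proof -
  have den: "of_real (ln (sqrt s)) + \<i> * of_real pi / 2 + of_real c = Complex (ln s / 2 + c) (pi / 2)"
    using s by (simp add: complex_eq_iff ln_sqrt)
  have num: "exp (- of_real (t * s)) = (of_real (exp (- (t * s))) :: complex)"
    by (metis exp_of_real of_real_minus)
  have "Im (HH c t s) = - (exp (- (t * s)) * (pi / 2)) / ((ln s / 2 + c)^2 + (pi / 2)^2)"
    unfolding HH_def den num by (simp add: Im_divide)
  also have "\<dots> = - (exp (- (t * s)) * (2 * pi)) / ((ln s + 2 * c)^2 + pi^2)"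
    by (simp add: power2_eq_square field_simps)
  finally have "Im (HH c t s) = - (exp (- (t * s)) * (2 * pi)) / ((ln s + 2 * c)^2 + pi^2)" .
  thus ?thesis using pi_gt_zero by (simp add: field_simps)
qed

lemma K1_identity:
  assumes t: "0 < t"
  shows "- (1 / pi) * Im (integral {0..1} (H0 c t)) = DD c 0 t"
proof -
  have hi: "H0 c t integrable_on {0..1}" using bottom1_dct(1)[OF t zero_less_one] .
  have "((\<lambda>s. - (1 / (2 * pi)) * Im (H0 c t s)) has_integral - (1 / (2 * pi)) * Im (integral {0..1} (H0 c t))) {0..1}"
    by (rule has_integral_mult_right[OF has_integral_Im[OF integrable_integral[OF hi]]])
  hence "((\<lambda>s. (- s) ^ 0 * exp (- (t * s)) * GG c s) has_integral - (1 / (2 * pi)) * Im (integral {0..1} (H0 c t))) {0..1}"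
  proof (rule has_integral_eq[rotated])
    fix s :: real assume "s \<in> {0..1}"
    show "- (1 / (2 * pi)) * Im (H0 c t s) = (- s) ^ 0 * exp (- (t * s)) * GG c s"
    proof (cases "0 < s")
      case True
      thus ?thesis using Im_HH[OF True, of c t]
        by (simp add: H0_def[OF t zero_less_one] GG_def)
    qed (use \<open>s \<in> {0..1}\<close> in \<open>simp add: H0_def[OF t zero_less_one] GG_def\<close>)
  qed
  hence "integral {0..1} (\<lambda>s. (- s) ^ 0 * exp (- (t * s)) * GG c s) = - (1 / (2 * pi)) * Im (integral {0..1} (H0 c t))"
    by (rule integral_unique)
  thus ?thesis unfolding DD_def by simp
qed

lemma HH_identity:
  assumes t: "0 < t"
  shows "- (1 / pi) * Im (integral {1..} (HH c t)) = 2 * integral {1..} (\<lambda>y. exp (- (t * y)) / ((ln y + 2 * c)^2 + pi^2))"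
proof -
  have hi: "HH c t integrable_on {1..}" using bottom2_dct(1)[OF t zero_less_one] .
  have "((\<lambda>s. - (1 / (2 * pi)) * Im (HH c t s)) has_integral - (1 / (2 * pi)) * Im (integral {1..} (HH c t))) {1..}"
    by (rule has_integral_mult_right[OF has_integral_Im[OF integrable_integral[OF hi]]])
  hence "((\<lambda>y. exp (- (t * y)) / ((ln y + 2 * c)^2 + pi^2)) has_integral - (1 / (2 * pi)) * Im (integral {1..} (HH c t))) {1..}"
  proof (rule has_integral_eq[rotated])
    fix y :: real assume "y \<in> {1..}"
    hence "0 < y" by simp
    from Im_HH[OF this, of c t]
    show "- (1 / (2 * pi)) * Im (HH c t y) = exp (- (t * y)) / ((ln y + 2 * c)^2 + pi^2)" .
  qed
  hence "integral {1..} (\<lambda>y. exp (- (t * y)) / ((ln y + 2 * c)^2 + pi^2)) = - (1 / (2 * pi)) * Im (integral {1..} (HH c t))"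
    by (rule integral_unique)
  thus ?thesis by simp
qed


lemma HH_eta: "(\<lambda>y::real. exp (- of_real (t * y)) /
                    (of_real (ln (sqrt y)) + \<i> * of_real pi / 2 + of_real c)) = HH c t"
  by (simp add: HH_def fun_eq_iff)

lemma limit_part:
  assumes t: "0 < t"
  shows "((\<lambda>R. K_partial th t R) \<longlongrightarrow>
           complex_of_real (- (1 / pi) * Im (integral {1..} (HH (kappa th) t)) + DD (kappa th) 0 t)) at_top"
proof -
  define c where "c = kappa th"
  define V where "V = - (1 / pi) * Im (integral {1..} (HH c t)) + DD c 0 t"
  have ev1: "eventually (\<lambda>R. 0 < ln R / 2 + c) at_top" by real_asymp
  have ev: "eventually (\<lambda>R. 0 < R \<and> 0 < ln R / 2 + c) at_top"
    using eventually_conj[OF eventually_gt_at_top[of 0] ev1] .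
  have bnd: "norm (K_partial th t R - complex_of_real V) \<le> (1 / (pi * t)) * (1 / (ln R / 2 + c))"
    if R: "0 < R" and K: "0 < ln R / 2 + c" for R
  proof -
    obtain L where L: "norm L \<le> 1 / (t * (ln R / 2 + c))"
      and id: "\<i> * integral {0..R} (g0 c t) = L - (integral {0..1} (H0 c t) + integral {1..} (HH c t))"
      using main_identity[OF t R K] by blast
    have "K_partial th t R = complex_of_real (Im (\<i> * integral {0..R} (g0 c t)) / pi)"
      using K_partial_eq[OF t R] by (simp add: c_def)
    also have "Im (\<i> * integral {0..R} (g0 c t)) / pi = Im L / pi + V"
      unfolding id V_def K1_identity[OF t, symmetric]
      using pi_gt_zero by (simp add: field_simps)
    finally have "K_partial th t R - complex_of_real V = complex_of_real (Im L / pi)" by simp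
    hence "norm (K_partial th t R - complex_of_real V) = \<bar>Im L\<bar> / pi"
      using pi_gt_zero by (simp only: norm_of_real abs_divide abs_of_pos)
    also have "\<dots> \<le> norm L / pi" using abs_Im_le_cmod[of L] pi_gt_zero by (simp add: divide_right_mono)
    also have "\<dots> \<le> 1 / (t * (ln R / 2 + c)) / pi" using divide_right_mono[OF L less_imp_le[OF pi_gt_zero]] .
    also have "\<dots> = (1 / (pi * t)) * (1 / (ln R / 2 + c))" by simp
    finally show ?thesis .
  qed
  have "((\<lambda>R. K_partial th t R - complex_of_real V) \<longlongrightarrow> 0) at_top"
  proof (rule Lim_null_comparison)
    show "eventually (\<lambda>R. norm (K_partial th t R - complex_of_real V) \<le> (1 / (pi * t)) * (1 / (ln R / 2 + c))) at_top"
      using ev by eventually_elim (use bnd in auto)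
    have "((\<lambda>R. 1 / (ln R / 2 + c)) \<longlongrightarrow> 0) at_top" by real_asymp
    thus "((\<lambda>R. (1 / (pi * t)) * (1 / (ln R / 2 + c))) \<longlongrightarrow> 0) at_top"
      by (rule tendsto_mult_right_zero)
  qed
  from tendsto_add[OF this tendsto_const[of "complex_of_real V"]]
  show ?thesis by (simp add: V_def c_def)
qed

theorem proposition5p1:
  fixes \<theta> :: real
  assumes "0 \<le> \<theta>" and "\<theta> < pi" and "\<theta> \<noteq> pi / 2"
  shows "\<exists>K1 :: real \<Rightarrow> real. \<exists>D :: nat \<Rightarrow> real \<Rightarrow> real.
           D 0 = K1 \<and>
           (\<forall>n. \<forall>t \<ge> 0. (D n has_real_derivative D (Suc n) t) (at t within {0..})) \<and>
           (\<exists>B. \<forall>t \<ge> 0. \<bar>K1 t\<bar> \<le> B) \<and>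
           (\<forall>t > 0.
              ((\<lambda>R. K_partial \<theta> t R) \<longlongrightarrow>
                 complex_of_real (- (1 / pi) * Im (integral {1..} (\<lambda>y::real.
                    exp (- of_real (t * y)) /
                    (of_real (ln (sqrt y)) + \<i> * of_real pi / 2 + of_real (kappa \<theta>))))
                  + K1 t)) at_top \<and>
              - (1 / pi) * Im (integral {1..} (\<lambda>y::real.
                    exp (- of_real (t * y)) /
                    (of_real (ln (sqrt y)) + \<i> * of_real pi / 2 + of_real (kappa \<theta>))))
                  + K1 t
              = 2 * integral {1..} (\<lambda>y::real.
                    exp (- (t * y)) / ((ln y + 2 * kappa \<theta>)\<^sup>2 + pi\<^sup>2)) + K1 t)"
proof -
  define c where "c = kappa \<theta>"
  have P1: "\<forall>n. \<forall>t \<ge> 0. (DD c n has_real_derivative DD c (Suc n) t) (at t within {0..})"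
    using DD_deriv by blast
  have P2: "\<exists>B. \<forall>t \<ge> 0. \<bar>DD c 0 t\<bar> \<le> B"
    using DD0_bound by blast
  have P3: "\<forall>t > 0.
              ((\<lambda>R. K_partial \<theta> t R) \<longlongrightarrow>
                 complex_of_real (- (1 / pi) * Im (integral {1..} (HH c t)) + DD c 0 t)) at_top \<and>
              - (1 / pi) * Im (integral {1..} (HH c t)) + DD c 0 t
              = 2 * integral {1..} (\<lambda>y::real. exp (- (t * y)) / ((ln y + 2 * c)\<^sup>2 + pi\<^sup>2)) + DD c 0 t"
  proof (intro allI impI conjI)
    fix t :: real assume t: "0 < t"
    show "((\<lambda>R. K_partial \<theta> t R) \<longlongrightarrow>
                 complex_of_real (- (1 / pi) * Im (integral {1..} (HH c t)) + DD c 0 t)) at_top"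
      using limit_part[OF t, of \<theta>] unfolding c_def .
    show "- (1 / pi) * Im (integral {1..} (HH c t)) + DD c 0 t
              = 2 * integral {1..} (\<lambda>y::real. exp (- (t * y)) / ((ln y + 2 * c)\<^sup>2 + pi\<^sup>2)) + DD c 0 t"
      using HH_identity[OF t, of c] by simp
  qed
  show ?thesis
    unfolding HH_eta c_def[symmetric]
    by (intro exI[of _ "DD c 0"] exI[of _ "DD c"] conjI refl P1 P2 P3)
qed

end
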